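(* Let $a\ge 2$ be an integer. For $i\ge 0$, let $S^{(a)}_i=\{a^{2i},a^{2i}+1,\ldots,a^{2i+1}\}$, and let $S^{(a)}=\bigcup_{i\ge0}S^{(a)}_i$. For each $i$, let $\sigma^a_i$ be a permutation of $S^{(a)}_i$ containing no 3-term arithmetic progression as a subsequence. Then: (a) the concatenation $\sigma^a_0\sigma^a_1\sigma^a_2\cdots$ contains no 4-term arithmetic progression as a subsequence, so $S^{(a)}$ is 4-free; (b) $\overline{d}(S^{(a)})=a/(a+1)$ and $\underline{d}(S^{(a)})=1/(a+1)$.
   Context: A sequence contains a $k$-term arithmetic progression as a subsequence if there are positions $i_1<\cdots<i_k$ whose entries satisfy $a_{i_{m+1}}-a_{i_m}=d$ for all $m$, for some fixed $d\neq0$ (positive or negative). A set $S$ of positive integers is $n$-free if its elements can be listed in a sequence, each element appearing exactly once, that contains no $n$-term arithmetic progression as a subsequence. For $S\subseteq\mathbb{Z}_{>0}$ with $A(n)=|S\cap[1,n]|$, the upper density is $\overline{d}(S)=\limsup_{n\to\infty} A(n)/n$ and the lower density is $\underline{d}(S)=\liminf_{n\to\infty} A(n)/n$. Every finite set of consecutive integers admits a permutation with no 3-term arithmetic progression as a subsequence. *)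

theory Defs
  imports "HOL-Analysis.Analysis" "HOL-Library.Liminf_Limsup"
begin

definition has_AP_list :: "nat \<Rightarrow> nat list \<Rightarrow> bool" where
  "has_AP_list k xs \<longleftrightarrow> (\<exists>(pos :: nat \<Rightarrow> nat) (d :: int). d \<noteq> 0 \<and>
      (\<forall>m<k. pos m < length xs) \<and>
      (\<forall>m. Suc m < k \<longrightarrow> pos m < pos (Suc m) \<and>
            int (xs ! pos (Suc m)) - int (xs ! pos m) = d))"

definition has_AP_seq :: "nat \<Rightarrow> (nat \<Rightarrow> nat) \<Rightarrow> bool" where
  "has_AP_seq k f \<longleftrightarrow> (\<exists>(pos :: nat \<Rightarrow> nat) (d :: int). d \<noteq> 0 \<and>
      (\<forall>m. Suc m < k \<longrightarrow> pos m < pos (Suc m) \<and>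
            int (f (pos (Suc m))) - int (f (pos m)) = d))"

text \<open>A set of positive integers is n-free if it can be listed (each element exactly once)
  in a sequence with no n-term AP subsequence; finite sets are listed by lists,
  infinite sets by bijective sequences indexed by nat.\<close>
definition n_free :: "nat \<Rightarrow> nat set \<Rightarrow> bool" where
  "n_free n S \<longleftrightarrow>
     (finite S \<and> (\<exists>xs. distinct xs \<and> set xs = S \<and> \<not> has_AP_list n xs)) \<or>
     (infinite S \<and> (\<exists>f. bij_betw f UNIV S \<and> \<not> has_AP_seq n f))"

definition counting :: "nat set \<Rightarrow> nat \<Rightarrow> nat" where
  "counting S n = card (S \<inter> {1..n})"

definition upper_density :: "nat set \<Rightarrow> ereal" where
  "upper_density S = limsup (\<lambda>n. ereal (real (counting S n) / real n))"

definition lower_density :: "nat set \<Rightarrow> ereal" where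
  "lower_density S = liminf (\<lambda>n. ereal (real (counting S n) / real n))"

definition blk_start :: "(nat \<Rightarrow> 'a list) \<Rightarrow> nat \<Rightarrow> nat" where
  "blk_start \<sigma> i = (\<Sum>j<i. length (\<sigma> j))"

definition concat_inf :: "(nat \<Rightarrow> 'a list) \<Rightarrow> nat \<Rightarrow> 'a" where
  "concat_inf \<sigma> n = (let i = (LEAST i. n < blk_start \<sigma> (Suc i)) in \<sigma> i ! (n - blk_start \<sigma> i))"

definition S_block :: "nat \<Rightarrow> nat \<Rightarrow> nat set" where
  "S_block a i = {a ^ (2*i) .. a ^ (2*i+1)}"

definition S_set :: "nat \<Rightarrow> nat set" where
  "S_set a = (\<Union>i. S_block a i)"

end

theory Submission
  imports Defs "HOL-Real_Asymp.Real_Asymp"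
begin


definition bi :: "(nat \<Rightarrow> 'a list) \<Rightarrow> nat \<Rightarrow> nat" where
  "bi \<sigma> n = (LEAST i. n < blk_start \<sigma> (Suc i))"

lemma bs_Suc: "blk_start \<sigma> (Suc i) = blk_start \<sigma> i + length (\<sigma> i)"
  by (simp add: blk_start_def)

lemma bs_0: "blk_start \<sigma> 0 = 0" by (simp add: blk_start_def)

context
  fixes \<sigma> :: "nat \<Rightarrow> 'a list"
  assumes ne: "\<And>i. \<sigma> i \<noteq> []"
begin

lemma bs_sm: "strict_mono (blk_start \<sigma>)"
  by (rule strict_mono_Suc_iff[THEN iffD2]) (use ne in \<open>auto simp: bs_Suc\<close>)

lemma bs_ge: "i \<le> blk_start \<sigma> i"
  using bs_sm strict_mono_imp_increasing by blast

lemma bi_bounds: "blk_start \<sigma> (bi \<sigma> n) \<le> n \<and> n < blk_start \<sigma> (Suc (bi \<sigma> n))"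
proof
  have ex: "n < blk_start \<sigma> (Suc n)" using bs_ge[of "Suc n"] by simp
  show "n < blk_start \<sigma> (Suc (bi \<sigma> n))" unfolding bi_def by (rule LeastI[where P="\<lambda>i. n < blk_start \<sigma> (Suc i)", OF ex])
  show "blk_start \<sigma> (bi \<sigma> n) \<le> n"
  proof (cases "bi \<sigma> n")
    case 0 then show ?thesis by (simp add: bs_0)
  next
    case (Suc j)
    have "\<not> n < blk_start \<sigma> (Suc j)"
      using not_less_Least[of j "\<lambda>i. n < blk_start \<sigma> (Suc i)"] Suc unfolding bi_def by simp
    then show ?thesis using Suc by simp
  qed
qed

lemma bi_unique: "blk_start \<sigma> i \<le> n \<Longrightarrow> n < blk_start \<sigma> (Suc i) \<Longrightarrow> bi \<sigma> n = i"
proof -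
  assume h: "blk_start \<sigma> i \<le> n" "n < blk_start \<sigma> (Suc i)"
  have b: "blk_start \<sigma> (bi \<sigma> n) \<le> n" "n < blk_start \<sigma> (Suc (bi \<sigma> n))" using bi_bounds by auto
  show ?thesis
  proof (rule ccontr)
    assume "bi \<sigma> n \<noteq> i"
    then consider "bi \<sigma> n < i" | "i < bi \<sigma> n" by linarith
    then show False
    proof cases
      case 1
      then have "Suc (bi \<sigma> n) \<le> i" by simp
      then have "blk_start \<sigma> (Suc (bi \<sigma> n)) \<le> blk_start \<sigma> i"
        using bs_sm strict_mono_less_eq by blast
      then show False using h b by linarith
    next
      case 2
      then have "Suc i \<le> bi \<sigma> n" by simp
      then have "blk_start \<sigma> (Suc i) \<le> blk_start \<sigma> (bi \<sigma> n)"
        using bs_sm strict_mono_less_eq by blast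
      then show False using h b by linarith
    qed
  qed
qed

lemma concat_eq: "concat_inf \<sigma> n = \<sigma> (bi \<sigma> n) ! (n - blk_start \<sigma> (bi \<sigma> n))"
  unfolding concat_inf_def bi_def Let_def by simp

lemma idx_lt: "n - blk_start \<sigma> (bi \<sigma> n) < length (\<sigma> (bi \<sigma> n))"
  using bi_bounds[of n] unfolding bs_Suc by linarith

lemma concat_mem: "concat_inf \<sigma> n \<in> set (\<sigma> (bi \<sigma> n))"
  using concat_eq idx_lt nth_mem by metis

lemma bi_mono: "n \<le> m \<Longrightarrow> bi \<sigma> n \<le> bi \<sigma> m"
proof -
  assume "n \<le> m"
  then have "n < blk_start \<sigma> (Suc (bi \<sigma> m))" using bi_bounds[of m] by linarith
  then show ?thesis unfolding bi_def[of _ n] by (rule Least_le)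
qed

lemma concat_at: "k < length (\<sigma> i) \<Longrightarrow> concat_inf \<sigma> (blk_start \<sigma> i + k) = \<sigma> i ! k"
proof -
  assume "k < length (\<sigma> i)"
  then have "bi \<sigma> (blk_start \<sigma> i + k) = i" by (intro bi_unique) (auto simp: bs_Suc)
  then show ?thesis using concat_eq by simp
qed

end




lemma blocks_disj:
  assumes "a \<ge> 2" "x \<in> S_block a j" "x \<in> S_block a k" shows "j = k"
proof (rule ccontr)
  assume "j \<noteq> k"
  then consider "j < k" | "k < j" by linarith
  then show False
  proof cases
    case 1
    have "a^(2*j+1) < a^(2*k)" using assms 1 by (intro power_strict_increasing) auto
    then show False using assms unfolding S_block_def by auto
  next
    case 2
    have "a^(2*k+1) < a^(2*j)" using assms 2 by (intro power_strict_increasing) auto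
    then show False using assms unfolding S_block_def by auto
  qed
qed

lemma no_jump:
  assumes "a \<ge> 2" "x \<in> S_block a i" "y \<in> S_block a j" "z \<in> S_block a k" "j < k"
    "int y - int x = int z - int y"
  shows False
proof -
  have "1 \<le> a^(2*i)" using assms by simp
  moreover have "a^(2*i) \<le> x" using assms unfolding S_block_def by auto
  ultimately have x1: "1 \<le> x" by linarith
  have y: "y \<le> a^(2*j+1)" using assms unfolding S_block_def by auto
  have z: "a^(2*k) \<le> z" using assms unfolding S_block_def by auto
  have "2 * a^(2*j+1) \<le> a * a^(2*j+1)" using assms by simp
  also have "\<dots> = a^(2*j+2)" by simp
  also have "\<dots> \<le> a^(2*k)" using assms by (intro power_increasing) auto
  finally have "2 * y \<le> z" using y z by linarith
  then show False using x1 assms(6) by linarith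
qed

lemma part_a:
  fixes a :: nat and \<sigma> :: "nat \<Rightarrow> nat list"
  assumes a2: "a \<ge> 2"
    and hs: "\<And>i. distinct (\<sigma> i) \<and> set (\<sigma> i) = S_block a i \<and> \<not> has_AP_list 3 (\<sigma> i)"
  shows "\<not> has_AP_seq 4 (concat_inf \<sigma>)"
proof
  have ne: "\<And>i. \<sigma> i \<noteq> []"
  proof -
    fix i have "a^(2*i) \<in> S_block a i" unfolding S_block_def using a2 by simp
    then show "\<sigma> i \<noteq> []" using hs[of i] by auto
  qed
  define f where "f = concat_inf \<sigma>"
  assume "has_AP_seq 4 (concat_inf \<sigma>)"
  then obtain pos and d :: int where d0: "d \<noteq> 0" and
    ap: "\<And>m. Suc m < 4 \<Longrightarrow> pos m < pos (Suc m) \<and> int (f (pos (Suc m))) - int (f (pos m)) = d"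
    unfolding has_AP_seq_def f_def by blast
  define b where "b m = bi \<sigma> (pos m)" for m
  have mem: "f (pos m) \<in> S_block a (b m)" for m
    using concat_mem[where \<sigma>=\<sigma>, OF ne, where n="pos m"] hs unfolding f_def b_def by auto
  have p01: "pos 0 < pos 1" and p12: "pos 1 < pos 2" and p23: "pos 2 < pos 3"
    using ap[of 0] ap[of 1] ap[of 2] by (auto simp: numeral_eq_Suc)
  have e1: "int (f (pos 1)) - int (f (pos 0)) = d" and e2: "int (f (pos 2)) - int (f (pos 1)) = d"
    and e3: "int (f (pos 3)) - int (f (pos 2)) = d"
    using ap[of 0] ap[of 1] ap[of 2] by (auto simp: numeral_eq_Suc)
  have b01: "b 0 \<le> b 1" and b12: "b 1 \<le> b 2" and b23: "b 2 \<le> b 3"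
    using bi_mono[where \<sigma>=\<sigma>, OF ne] p01 p12 p23 unfolding b_def by auto
  show False
  proof (cases "b 1 = b 2 \<and> b 2 = b 3")
    case True
    define B where "B = b 1"
    define s where "s = blk_start \<sigma> B"
    have bB: "b 1 = B" "b 2 = B" "b 3 = B" using True B_def by auto
    have bnd: "s \<le> pos m \<and> pos m < s + length (\<sigma> B)" if "b m = B" for m
      using bi_bounds[where \<sigma>=\<sigma>, OF ne, where n="pos m"] that unfolding b_def s_def bs_Suc by auto
    have val: "f (pos m) = \<sigma> B ! (pos m - s)" if "b m = B" for m
      using concat_eq[where \<sigma>=\<sigma>, OF ne, where n="pos m"] that unfolding b_def s_def f_def by auto
    have "has_AP_list 3 (\<sigma> B)"
      unfolding has_AP_list_def
    proof (intro exI[of _ "\<lambda>m. pos (Suc m) - s"] exI[of _ d] conjI allI impI)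
      show "d \<noteq> 0" by fact
      fix m assume "m < (3::nat)"
      then have "m = 0 \<or> m = 1 \<or> m = 2" by auto
      then show "pos (Suc m) - s < length (\<sigma> B)" using bnd[of 1] bnd[of 2] bnd[of 3] bB
        by (auto simp: numeral_eq_Suc)
    next
      fix m assume "Suc m < (3::nat)"
      then have "m = 0 \<or> m = 1" by auto
      then show "pos (Suc m) - s < pos (Suc (Suc m)) - s"
        using bnd[of 1] bnd[of 2] bnd[of 3] bB p12 p23 by (auto simp: numeral_eq_Suc)
    next
      fix m assume "Suc m < (3::nat)"
      then have "m = 0 \<or> m = 1" by auto
      then show "int (\<sigma> B ! (pos (Suc (Suc m)) - s)) - int (\<sigma> B ! (pos (Suc m) - s)) = d"
        using val[of 1] val[of 2] val[of 3] bB e2 e3 by (auto simp: numeral_eq_Suc)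
    qed
    then show False using hs by blast
  next
    case False
    then have "b 1 < b 2 \<or> b 2 < b 3" using b12 b23 by linarith
    then show False
    proof
      assume "b 1 < b 2"
      then show False using no_jump[OF a2 mem[of 0] mem[of 1] mem[of 2]] e1 e2 by linarith
    next
      assume "b 2 < b 3"
      then show False using no_jump[OF a2 mem[of 1] mem[of 2] mem[of 3]] e2 e3 by linarith
    qed
  qed
qed

lemma part_bij:
  fixes a :: nat and \<sigma> :: "nat \<Rightarrow> nat list"
  assumes a2: "a \<ge> 2"
    and hs: "\<And>i. distinct (\<sigma> i) \<and> set (\<sigma> i) = S_block a i \<and> \<not> has_AP_list 3 (\<sigma> i)"
  shows "bij_betw (concat_inf \<sigma>) UNIV (S_set a)"
proof -
  have ne: "\<And>i. \<sigma> i \<noteq> []"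
  proof -
    fix i have "a^(2*i) \<in> S_block a i" unfolding S_block_def using a2 by simp
    then show "\<sigma> i \<noteq> []" using hs[of i] by auto
  qed
  have mem: "concat_inf \<sigma> n \<in> S_block a (bi \<sigma> n)" for n
    using concat_mem[where \<sigma>=\<sigma>, OF ne, where n=n] hs by auto
  have inj: "inj (concat_inf \<sigma>)"
  proof (rule injI)
    fix n m assume eq: "concat_inf \<sigma> n = concat_inf \<sigma> m"
    have B: "bi \<sigma> n = bi \<sigma> m" using blocks_disj[OF a2 mem[of n]] mem[of m] eq by simp
    define s where "s = blk_start \<sigma> (bi \<sigma> n)"
    have "\<sigma> (bi \<sigma> n) ! (n - s) = \<sigma> (bi \<sigma> n) ! (m - s)"
      using eq concat_eq[where \<sigma>=\<sigma>, OF ne, where n=n] concat_eq[where \<sigma>=\<sigma>, OF ne, where n=m] B s_def by simp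
    moreover have "n - s < length (\<sigma> (bi \<sigma> n))" "m - s < length (\<sigma> (bi \<sigma> n))"
      using idx_lt[where \<sigma>=\<sigma>, OF ne, where n=n] idx_lt[where \<sigma>=\<sigma>, OF ne, where n=m] B s_def by auto
    ultimately have "n - s = m - s" using hs[of "bi \<sigma> n"] nth_eq_iff_index_eq by blast
    moreover have "s \<le> n" "s \<le> m" using bi_bounds[where \<sigma>=\<sigma>, OF ne, where n=n] bi_bounds[where \<sigma>=\<sigma>, OF ne, where n=m] B s_def by auto
    ultimately show "n = m" by linarith
  qed
  have "range (concat_inf \<sigma>) = S_set a"
  proof
    show "range (concat_inf \<sigma>) \<subseteq> S_set a" using mem unfolding S_set_def by blast
    show "S_set a \<subseteq> range (concat_inf \<sigma>)"
    proof
      fix x assume "x \<in> S_set a"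
      then obtain i where "x \<in> S_block a i" unfolding S_set_def by blast
      then have "x \<in> set (\<sigma> i)" using hs by auto
      then obtain k where k: "k < length (\<sigma> i)" "\<sigma> i ! k = x" by (auto simp: in_set_conv_nth)
      then have "concat_inf \<sigma> (blk_start \<sigma> i + k) = x" using concat_at[where \<sigma>=\<sigma>, OF ne k(1)] by simp
      then show "x \<in> range (concat_inf \<sigma>)" by (metis rangeI)
    qed
  qed
  then show ?thesis using inj by (simp add: bij_betw_def)
qed




lemma counting_split:
  assumes "n \<le> m" shows "counting S m = counting S n + card (S \<inter> {n<..m})"
proof -
  have "S \<inter> {1..m} = (S \<inter> {1..n}) \<union> (S \<inter> {n<..m})" using assms by auto
  moreover have "(S \<inter> {1..n}) \<inter> (S \<inter> {n<..m}) = {}" by auto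
  ultimately show ?thesis unfolding counting_def by (simp add: card_Un_disjoint)
qed

context
  fixes a :: nat assumes a2: "a \<ge> 2"
begin

lemma block_sub: "{a^(2*i)..a^(2*i+1)} \<subseteq> S_set a"
  unfolding S_set_def S_block_def by blast

lemma gap_out: "a^(2*i+1) < x \<Longrightarrow> x < a^(2*i+2) \<Longrightarrow> x \<notin> S_set a"
proof
  assume h: "a^(2*i+1) < x" "x < a^(2*i+2)" "x \<in> S_set a"
  then obtain j where j: "a^(2*j) \<le> x" "x \<le> a^(2*j+1)" unfolding S_set_def S_block_def by auto
  show False
  proof (cases "j \<le> i")
    case True
    then have "a^(2*j+1) \<le> a^(2*i+1)" using a2 by (intro power_increasing) auto
    then show False using h j by linarith
  next
    case False
    then have "a^(2*i+2) \<le> a^(2*j)" using a2 by (intro power_increasing) auto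
    then show False using h j by linarith
  qed
qed

lemma pow_pos: "1 \<le> a^k" using a2 by simp

lemma cnt_block:
  assumes "a^(2*i) \<le> n" "n \<le> a^(2*i+1)"
  shows "counting (S_set a) n = counting (S_set a) (a^(2*i) - 1) + (n + 1 - a^(2*i))"
proof -
  have "{a^(2*i) - 1<..n} = {a^(2*i)..n}" using pow_pos[of "2*i"] by auto
  moreover have "{a^(2*i)..n} \<subseteq> S_set a" using block_sub[of i] assms by auto
  ultimately have "S_set a \<inter> {a^(2*i) - 1<..n} = {a^(2*i)..n}" by auto
  then show ?thesis using counting_split[of "a^(2*i) - 1" n "S_set a"] assms by simp
qed

lemma cnt_gap:
  assumes "a^(2*i+1) \<le> n" "n < a^(2*i+2)"
  shows "counting (S_set a) n = counting (S_set a) (a^(2*i+1))"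
proof -
  have "S_set a \<inter> {a^(2*i+1)<..n} = {}" using gap_out[of i] assms by auto
  then show ?thesis using counting_split[of "a^(2*i+1)" n "S_set a"] assms by simp
qed

lemma P_closed:
  "real (a+1) * real (counting (S_set a) (a^(2*i) - 1)) = real a^(2*i) - 1 + real (a+1) * real i"
proof (induction i)
  case 0
  have "counting (S_set a) 0 = 0" unfolding counting_def by simp
  then show ?case by simp
next
  case (Suc i)
  have le: "a^(2*i) \<le> a^(2*i+1)" using a2 by (intro power_increasing) auto
  have lt: "a^(2*i+1) < a^(2*i+2)" using a2 by (intro power_strict_increasing) auto
  have "counting (S_set a) (a^(2*Suc i) - 1) = counting (S_set a) (a^(2*i+1))"
  proof -
    have e: "a^(2*Suc i) = a^(2*i+2)" by simp
    have h1: "a^(2*i+1) \<le> a^(2*i+2) - 1" using lt by linarith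
    have h2: "a^(2*i+2) - 1 < a^(2*i+2)" using pow_pos[of "2*i+2"] by linarith
    show ?thesis unfolding e by (rule cnt_gap[OF h1 h2])
  qed
  also have "\<dots> = counting (S_set a) (a^(2*i) - 1) + (a^(2*i+1) + 1 - a^(2*i))"
    using cnt_block[of i "a^(2*i+1)"] le by simp
  finally have cc: "counting (S_set a) (a^(2*Suc i) - 1) = counting (S_set a) (a^(2*i) - 1) + (a^(2*i+1) + 1 - a^(2*i))" .
  have le2: "a^(2*i) \<le> a^(2*i+1) + 1" using le by linarith
  have "real (a^(2*i+1) + 1 - a^(2*i)) = real a^(2*i+1) + 1 - real a^(2*i)"
    by (simp only: of_nat_diff[OF le2] of_nat_add of_nat_power of_nat_1)
  then have XX: "real (counting (S_set a) (a^(2*Suc i) - 1)) =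
      real (counting (S_set a) (a^(2*i) - 1)) + real a ^(2*i+1) + 1 - real a^(2*i)"
    unfolding cc of_nat_add by simp
  then have "real (a+1) * real (counting (S_set a) (a^(2*Suc i) - 1)) =
      real (a+1) * real (counting (S_set a) (a^(2*i) - 1)) + real (a+1) * (real a ^(2*i+1) + 1 - real a^(2*i))"
    by (simp only: XX) (simp add: algebra_simps)
  also have "\<dots> = real a^(2*i) - 1 + real (a+1) * real i + real (a+1) * (real a ^(2*i+1) + 1 - real a^(2*i))"
    using Suc.IH by simp
  also have "\<dots> = real a^(2*Suc i) - 1 + real (a+1) * real (Suc i)"
    by (simp add: algebra_simps power_Suc)
  finally show ?case .
qed

end



context
  fixes a :: nat assumes a2: "a \<ge> 2"
begin

lemma find_i: assumes "1 \<le> n" shows "\<exists>i. a^(2*i) \<le> n \<and> n < a^(2*i+2)"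
proof -
  have ex: "n < a^(2*n)"
  proof -
    have "n < 2^n" by (rule less_exp)
    also have "\<dots> \<le> a^n" using a2 by (intro power_mono) auto
    also have "\<dots> \<le> a^(2*n)" using a2 by (intro power_increasing) auto
    finally show ?thesis .
  qed
  define j where "j = (LEAST j. n < a^(2*j))"
  have j1: "n < a^(2*j)" unfolding j_def by (rule LeastI[where P="\<lambda>j. n < a^(2*j)", OF ex])
  have "j \<noteq> 0"
  proof
    assume "j = 0" then show False using j1 assms by simp
  qed
  then obtain i where ji: "j = Suc i" by (cases j) auto
  have "\<not> n < a^(2*i)" using not_less_Least[of i "\<lambda>j. n < a^(2*j)"] ji unfolding j_def by simp
  then show ?thesis using j1 ji by (intro exI[of _ i]) auto
qed

lemma cnt_bounds:
  assumes "a^(2*i) \<le> n" "n < a^(2*i+2)"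
  shows "real (a+1) * real (counting (S_set a) n) \<le> real a * real n + real (a+1) * (real i + 1)
    \<and> real n \<le> real (a+1) * real (counting (S_set a) n)"
proof -
  define A where "A = real a^(2*i)"
  define P where "P = real (counting (S_set a) (a^(2*i) - 1))"
  have PC: "real (a+1) * P = A - 1 + real (a+1) * real i" unfolding P_def A_def by (rule P_closed[OF a2])
  have ra: "real a \<ge> 2" using a2 by simp
  have nA: "A \<le> real n" unfolding A_def using assms(1)
    by (metis of_nat_le_iff of_nat_power)
  show ?thesis
  proof (cases "n \<le> a^(2*i+1)")
    case True
    have "counting (S_set a) n = counting (S_set a) (a^(2*i) - 1) + (n + 1 - a^(2*i))"
      using cnt_block[OF a2 assms(1) True] .
    then have c: "real (counting (S_set a) n) = P + real n + 1 - A"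
      unfolding P_def A_def using assms(1) by (simp add: of_nat_diff)
    have n2: "real n \<le> real a * A" unfolding A_def using True
      by (metis of_nat_le_iff of_nat_power power_Suc add.commute plus_1_eq_Suc)
    have "real (a+1) * real (counting (S_set a) n) = real (a+1) * P + real (a+1) * (real n + 1 - A)"
      unfolding c by (simp add: algebra_simps)
    also have "\<dots> = A - 1 + real (a+1) * real i + (real a + 1) * (real n + 1 - A)" using PC by simp
    finally have E: "real (a+1) * real (counting (S_set a) n) =
       real a * real n + real n - real a * A + real a + real a * real i + real i" by (simp add: algebra_simps)
    have "real a * A \<le> real a * real n" using nA ra by (intro mult_left_mono) auto
    moreover have "real (a+1) * (real i + 1) = real a * real i + real i + real a + 1" by (simp add: algebra_simps)
    moreover have "0 \<le> real a * real i" by simp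
    ultimately show ?thesis unfolding E using n2 ra by linarith
  next
    case False
    have h1: "a^(2*i+1) \<le> a^(2*i+2) - 1" using assms False by linarith
    have h2: "a^(2*i+2) - 1 < a^(2*i+2)" using assms by linarith
    have "counting (S_set a) n = counting (S_set a) (a^(2*i+1))"
      using cnt_gap[OF a2, of i n] False assms by linarith
    also have "\<dots> = counting (S_set a) (a^(2*i+2) - 1)"
      using cnt_gap[OF a2 h1 h2] by simp
    finally have c: "real (a+1) * real (counting (S_set a) n) = real a^(2*(Suc i)) - 1 + real (a+1) * real (Suc i)"
      using P_closed[OF a2, of "Suc i"] by (simp add: mult_2_right)
    have pw: "real a^(2*(Suc i)) = real a * (real a * A)" unfolding A_def by (simp add: power_Suc)
    have n3: "real a * A < real n" unfolding A_def using False
      by (metis not_le of_nat_less_iff of_nat_power power_Suc add.commute plus_1_eq_Suc)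
    have n4: "real n \<le> real a^(2*(Suc i)) - 1" using assms(2)
      by (metis of_nat_less_iff of_nat_power of_nat_1 add.commute plus_1_eq_Suc mult_Suc_right
          less_eq_real_def diff_ge_0_iff_ge le_diff_eq nat_less_real_le numeral_2_eq_2)
    have "real a * (real a * A) \<le> real a * real n" using n3 ra by (intro mult_left_mono) auto
    moreover have "real (a+1) * (real i + 1) = real (a+1) * real (Suc i)" by simp
    moreover have "0 \<le> real (a+1) * real (Suc i)" by simp
    ultimately show ?thesis unfolding c pw using n4 pw by linarith
  qed
qed

end



lemma w_lim: "((\<lambda>n::nat. c + sqrt (real n) / real n) \<longlongrightarrow> (c::real)) sequentially"
  by real_asymp

context
  fixes a :: nat assumes a2: "a \<ge> 2"
begin

lemma sqrt_bd: assumes "a^(2*i) \<le> n" shows "real i + 1 \<le> sqrt (real n)"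
proof -
  have "i < 2^i" by (rule less_exp)
  then have "real i + 1 \<le> 2^i" by (metis Suc_leI of_nat_Suc of_nat_le_iff of_nat_numeral of_nat_power add.commute)
  also have "(2::real)^i \<le> real a^i" using a2 by (intro power_mono) auto
  also have "real a^i = sqrt ((real a^i)^2)" by simp
  also have "\<dots> = sqrt (real a^(2*i))" by (simp add: power_mult[symmetric] mult.commute)
  also have "\<dots> \<le> sqrt (real n)" using assms
    by (metis of_nat_le_iff of_nat_power real_sqrt_le_iff)
  finally show ?thesis .
qed

lemma Q_closed: "real (a+1) * real (counting (S_set a) (a^(2*i+1))) = real a^(2*Suc i) - 1 + real (a+1) * real (Suc i)"
proof -
  have lt: "a^(2*i+1) < a^(2*i+2)" using a2 by (intro power_strict_increasing) auto
  have h1: "a^(2*i+1) \<le> a^(2*i+2) - 1" using lt by linarith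
  have h2: "a^(2*i+2) - 1 < a^(2*i+2)" using lt by linarith
  have "counting (S_set a) (a^(2*i+1)) = counting (S_set a) (a^(2*i+2) - 1)"
    using cnt_gap[OF a2 h1 h2] by simp
  then show ?thesis using P_closed[OF a2, of "Suc i"] by (simp add: mult_2_right)
qed

lemma gen_bounds: assumes "1 \<le> n"
  shows "real (counting (S_set a) n) / real n \<le> real a / (real a + 1) + sqrt (real n) / real n
    \<and> 1 / (real a + 1) \<le> real (counting (S_set a) n) / real n"
proof -
  obtain i where i: "a^(2*i) \<le> n" "n < a^(2*i+2)" using find_i[OF a2 assms] by blast
  have b: "real (a+1) * real (counting (S_set a) n) \<le> real a * real n + real (a+1) * (real i + 1)"
       "real n \<le> real (a+1) * real (counting (S_set a) n)" using cnt_bounds[OF a2 i] by auto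
  have s: "real i + 1 \<le> sqrt (real n)" by (rule sqrt_bd[OF i(1)])
  have "real (a+1) * (real i + 1) \<le> real (a+1) * sqrt (real n)" using s by (intro mult_left_mono) auto
  then have b1: "real (a + 1) * real (counting (S_set a) n) \<le> real a * real n + real (a + 1) * sqrt (real n)"
    using b(1) by linarith
  have np: "real n > 0" using assms by simp
  have ap: "real a + 1 > 0" by simp
  show ?thesis
  proof
    show "real (counting (S_set a) n) / real n \<le> real a / (real a + 1) + sqrt (real n) / real n"
    proof -
      have "real (counting (S_set a) n) / real n = (real (a+1) * real (counting (S_set a) n)) / (real (a+1) * real n)"
        by simp
      also have "\<dots> \<le> (real a * real n + real (a + 1) * sqrt (real n)) / (real (a+1) * real n)"
        by (rule divide_right_mono[OF b1]) simp
      also have "\<dots> = real a / (real a + 1) + sqrt (real n) / real n" using np ap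
        by (simp add: field_simps)
      finally show ?thesis .
    qed
    show "1 / (real a + 1) \<le> real (counting (S_set a) n) / real n"
      using b(2) np ap by (simp add: field_simps)
  qed
qed

end



context
  fixes a :: nat assumes a2: "a \<ge> 2"
begin

lemma upper_dens: "upper_density (S_set a) = ereal (real a / (real a + 1))"
proof (rule antisym)
  define u where "u n = ereal (real (counting (S_set a) n) / real n)" for n
  define L where "L = real a / (real a + 1)"
  have ev: "eventually (\<lambda>n. u n \<le> ereal (L + sqrt (real n) / real n)) sequentially"
    using eventually_ge_at_top[of 1] by eventually_elim (use gen_bounds[OF a2] in \<open>auto simp: u_def L_def\<close>)
  have "limsup u \<le> limsup (\<lambda>n. ereal (L + sqrt (real n) / real n))" by (rule Limsup_mono[OF ev])
  also have "\<dots> = ereal L"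
    by (rule lim_imp_Limsup) (auto intro!: tendsto_ereal w_lim)
  finally show "upper_density (S_set a) \<le> ereal (real a / (real a + 1))"
    unfolding upper_density_def u_def L_def .
next
  define u where "u n = ereal (real (counting (S_set a) n) / real n)" for n
  define r where "r i = a^(2*i+1)" for i
  have sm: "strict_mono r" unfolding r_def
  proof (rule strict_mono_Suc_iff[THEN iffD2], intro allI)
    fix i show "a^(2*i+1) < a^(2*Suc i+1)" using a2 by (intro power_strict_increasing) auto
  qed
  have "ereal (real a / (real a + 1)) \<le> u (r i)" for i
  proof -
    have Q: "real (a+1) * real (counting (S_set a) (r i)) = real a^(2*Suc i) - 1 + real (a+1) * real (Suc i)"
      unfolding r_def by (rule Q_closed[OF a2])
    have rp: "real (r i) > 0" unfolding r_def using a2 by simp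
    have rr: "real a^(2*Suc i) = real a * real (r i)" unfolding r_def by (simp add: power_Suc)
    have "real (a+1) * real (Suc i) \<ge> 1 * 1" by (intro mult_mono) auto
    then have "real a * real (r i) \<le> real (a+1) * real (counting (S_set a) (r i))"
      using Q rr by linarith
    then have "real a / (real a + 1) \<le> real (counting (S_set a) (r i)) / real (r i)"
      using rp by (simp add: field_simps)
    then show ?thesis unfolding u_def by simp
  qed
  then have "ereal (real a / (real a + 1)) \<le> limsup (u \<circ> r)"
    by (intro le_Limsup) auto
  also have "\<dots> \<le> limsup u" by (rule limsup_subseq_mono[OF sm])
  finally show "ereal (real a / (real a + 1)) \<le> upper_density (S_set a)"
    unfolding upper_density_def u_def .
qed

lemma lower_dens: "lower_density (S_set a) = ereal (1 / (real a + 1))"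
proof (rule antisym)
  define u where "u n = ereal (real (counting (S_set a) n) / real n)" for n
  define L where "L = 1 / (real a + 1)"
  define r where "r i = a^(2*i+2) - 1" for i
  have pp: "a^(2*i) \<le> r i" "1 \<le> r i" for i
  proof -
    have h: "a^(2*i) < a^(2*i+2)" using a2 by (intro power_strict_increasing) auto
    have h1: "1 \<le> a^(2*i)" using a2 by simp
    show "a^(2*i) \<le> r i" unfolding r_def using h by linarith
    show "1 \<le> r i" unfolding r_def using h h1 by linarith
  qed
  have sm: "strict_mono r" unfolding r_def
  proof (rule strict_mono_Suc_iff[THEN iffD2], intro allI)
    fix i
    have "a^(2*i+2) < a^(2*Suc i+2)" using a2 by (intro power_strict_increasing) auto
    moreover have "1 \<le> a^(2*i+2)" using a2 by simp
    ultimately show "a^(2*i+2) - 1 < a^(2*Suc i+2) - 1" by linarith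
  qed
  have "u (r i) \<le> ereal (L + sqrt (real (r i)) / real (r i))" for i
  proof -
    have "real (a+1) * real (counting (S_set a) (r i)) = real a^(2*Suc i) - 1 + real (a+1) * real (Suc i)"
      using P_closed[OF a2, of "Suc i"] unfolding r_def by (simp add: mult_2_right)
    moreover have "real (r i) = real a^(2*Suc i) - 1"
    proof -
      have ge: "1 \<le> a^(2*i+2)" using a2 by simp
      have "real (r i) = real (a^(2*i+2)) - 1" unfolding r_def using ge by (simp only: of_nat_diff of_nat_1)
      then show ?thesis by (simp add: mult_2_right)
    qed
    ultimately have E: "real (a+1) * real (counting (S_set a) (r i)) = real (r i) + real (a+1) * (real i + 1)"
      by simp
    have s: "real i + 1 \<le> sqrt (real (r i))" by (rule sqrt_bd[OF a2 pp(1)])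
    have "real (a+1) * (real i + 1) \<le> real (a+1) * sqrt (real (r i))" using s by (intro mult_left_mono) auto
    then have b1: "real (a+1) * real (counting (S_set a) (r i)) \<le> real (r i) + real (a+1) * sqrt (real (r i))"
      using E by linarith
    have np: "real (r i) > 0" using pp(2)[of i] by simp
    have "real (counting (S_set a) (r i)) / real (r i) = (real (a+1) * real (counting (S_set a) (r i))) / (real (a+1) * real (r i))"
      by simp
    also have "\<dots> \<le> (real (r i) + real (a+1) * sqrt (real (r i))) / (real (a+1) * real (r i))"
      by (rule divide_right_mono[OF b1]) simp
    also have "\<dots> = L + sqrt (real (r i)) / real (r i)" using np unfolding L_def
      by (simp add: field_simps)
    finally show ?thesis unfolding u_def by simp
  qed
  then have "liminf (u \<circ> r) \<le> liminf (\<lambda>i. ereal (L + sqrt (real (r i)) / real (r i)))"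
    by (intro Liminf_mono) auto
  also have "\<dots> = ereal L"
  proof (rule lim_imp_Liminf)
    show "((\<lambda>i. ereal (L + sqrt (real (r i)) / real (r i))) \<longlongrightarrow> ereal L) sequentially"
      using filterlim_compose[OF w_lim[of L] filterlim_subseq[OF sm]] by (simp add: o_def)
  qed auto
  finally have "liminf (u \<circ> r) \<le> ereal L" .
  moreover have "liminf u \<le> liminf (u \<circ> r)" by (rule liminf_subseq_mono[OF sm])
  ultimately show "lower_density (S_set a) \<le> ereal (1 / (real a + 1))"
    unfolding lower_density_def u_def L_def by simp
next
  have ev: "eventually (\<lambda>n. ereal (1 / (real a + 1)) \<le> ereal (real (counting (S_set a) n) / real n)) sequentially"
    using eventually_ge_at_top[of 1] by eventually_elim (use gen_bounds[OF a2] in auto)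
  show "ereal (1 / (real a + 1)) \<le> lower_density (S_set a)"
    unfolding lower_density_def by (rule Liminf_bounded[OF ev])
qed

end


theorem mainTheorem8:
  fixes a :: nat and \<sigma> :: "nat \<Rightarrow> nat list"
  assumes "a \<ge> 2"
    and "\<And>i. distinct (\<sigma> i) \<and> set (\<sigma> i) = S_block a i \<and> \<not> has_AP_list 3 (\<sigma> i)"
  shows "\<not> has_AP_seq 4 (concat_inf \<sigma>) \<and> n_free 4 (S_set a)
    \<and> upper_density (S_set a) = ereal (real a / (real a + 1))
    \<and> lower_density (S_set a) = ereal (1 / (real a + 1))"
proof (intro conjI)
  show na: "\<not> has_AP_seq 4 (concat_inf \<sigma>)" by (rule part_a[OF assms])
  have bij: "bij_betw (concat_inf \<sigma>) UNIV (S_set a)" by (rule part_bij[OF assms])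
  have "infinite (S_set a)" using bij_betw_finite[OF bij] by simp
  then show "n_free 4 (S_set a)" unfolding n_free_def using bij na by blast
  show "upper_density (S_set a) = ereal (real a / (real a + 1))" by (rule upper_dens[OF assms(1)])
  show "lower_density (S_set a) = ereal (1 / (real a + 1))" by (rule lower_dens[OF assms(1)])
qed

end
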